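(* The translation of LTL formulas whose languages are recognizable by deterministic co-Büchi word automata into GFG-NSWs is doubly exponential: in the worst case, a GFG-NSW equivalent to such a formula requires a number of states doubly exponential in the length of the formula.
   Context: LTL is linear temporal logic; the language of an LTL formula over atomic propositions $AP$ is the set of infinite words over $2^{AP}$ satisfying it. An NSW is a nondeterministic Streett word automaton $\langle\Sigma,Q,Q_0,\delta,\alpha\rangle$ with $\delta:Q\times\Sigma\to2^Q$ and $\alpha$ a set of pairs $\langle E,F\rangle$; a run is accepting iff for every pair the set $S$ of infinitely visited states satisfies $S\cap E=\emptyset$ or $S\cap F\ne\emptyset$. A deterministic co-Büchi word automaton (DCW) is a deterministic automaton with $\alpha\subseteq Q$ accepting runs that visit $\alpha$ only finitely often. An automaton is GFG if there is a strategy $g:\Sigma^*\to Q$ such that for every $w=a_1a_2\cdots$, $g(\epsilon),g(a_1),g(a_1a_2),\ldots$ is a run on $w$, accepting whenever $w$ is in the language. *)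

theory Defs
  imports Main
begin

datatype 'ap ltl =
    LTrue
  | Prop 'ap
  | LNot "'ap ltl"
  | LAnd "'ap ltl" "'ap ltl"
  | LNext "'ap ltl"
  | LUntil "'ap ltl" "'ap ltl"

fun ltl_length :: "'ap ltl \<Rightarrow> nat" where
  "ltl_length LTrue = 1"
| "ltl_length (Prop a) = 1"
| "ltl_length (LNot f) = 1 + ltl_length f"
| "ltl_length (LAnd f g) = 1 + ltl_length f + ltl_length g"
| "ltl_length (LNext f) = 1 + ltl_length f"
| "ltl_length (LUntil f g) = 1 + ltl_length f + ltl_length g"

fun ltl_props :: "'ap ltl \<Rightarrow> 'ap set" where
  "ltl_props LTrue = {}"
| "ltl_props (Prop a) = {a}"
| "ltl_props (LNot f) = ltl_props f"
| "ltl_props (LAnd f g) = ltl_props f \<union> ltl_props g"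
| "ltl_props (LNext f) = ltl_props f"
| "ltl_props (LUntil f g) = ltl_props f \<union> ltl_props g"

type_synonym 'a word = "nat \<Rightarrow> 'a"

definition suffix_w :: "nat \<Rightarrow> 'a word \<Rightarrow> 'a word" where
  "suffix_w i w = (\<lambda>j. w (i + j))"

fun ltl_sat :: "'ap set word \<Rightarrow> 'ap ltl \<Rightarrow> bool" where
  "ltl_sat w LTrue = True"
| "ltl_sat w (Prop a) = (a \<in> w 0)"
| "ltl_sat w (LNot f) = (\<not> ltl_sat w f)"
| "ltl_sat w (LAnd f g) = (ltl_sat w f \<and> ltl_sat w g)"
| "ltl_sat w (LNext f) = ltl_sat (suffix_w 1 w) f"
| "ltl_sat w (LUntil f g) =
     (\<exists>k. ltl_sat (suffix_w k w) g \<and> (\<forall>j<k. ltl_sat (suffix_w j w) f))"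

definition words_over :: "'a set \<Rightarrow> 'a word set" where
  "words_over \<Sigma> = {w. \<forall>i. w i \<in> \<Sigma>}"

definition ltl_lang :: "'ap set \<Rightarrow> 'ap ltl \<Rightarrow> 'ap set word set" where
  "ltl_lang AP f = {w \<in> words_over (Pow AP). ltl_sat w f}"

text \<open>States are taken from nat; every finite automaton is isomorphic to one of this form.\<close>
record 'a nsw =
  nsw_alph :: "'a set"
  nsw_states :: "nat set"
  nsw_init :: "nat set"
  nsw_delta :: "nat \<Rightarrow> 'a \<Rightarrow> nat set"
  nsw_acc :: "(nat set \<times> nat set) set"

definition nsw_wf :: "'a nsw \<Rightarrow> bool" where
  "nsw_wf A \<longleftrightarrow> finite (nsw_states A) \<and> nsw_init A \<subseteq> nsw_states A
     \<and> (\<forall>q \<in> nsw_states A. \<forall>a \<in> nsw_alph A. nsw_delta A q a \<subseteq> nsw_states A)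
     \<and> (\<forall>(E,F) \<in> nsw_acc A. E \<subseteq> nsw_states A \<and> F \<subseteq> nsw_states A)"

definition inf_set :: "nat word \<Rightarrow> nat set" where
  "inf_set r = {q. \<exists>\<^sub>\<infinity>i. r i = q}"

definition nsw_run :: "'a nsw \<Rightarrow> 'a word \<Rightarrow> nat word \<Rightarrow> bool" where
  "nsw_run A w r \<longleftrightarrow> r 0 \<in> nsw_init A \<and> (\<forall>i. r (Suc i) \<in> nsw_delta A (r i) (w i))"

definition streett_accepting :: "'a nsw \<Rightarrow> nat word \<Rightarrow> bool" where
  "streett_accepting A r \<longleftrightarrow>
     (\<forall>(E,F) \<in> nsw_acc A. inf_set r \<inter> E = {} \<or> inf_set r \<inter> F \<noteq> {})"

definition nsw_lang :: "'a nsw \<Rightarrow> 'a word set" where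
  "nsw_lang A = {w \<in> words_over (nsw_alph A).
      \<exists>r. nsw_run A w r \<and> streett_accepting A r}"

definition prefix_w :: "nat \<Rightarrow> 'a word \<Rightarrow> 'a list" where
  "prefix_w i w = map w [0..<i]"

definition nsw_gfg :: "'a nsw \<Rightarrow> bool" where
  "nsw_gfg A \<longleftrightarrow> (\<exists>g :: 'a list \<Rightarrow> nat.
     \<forall>w \<in> words_over (nsw_alph A).
       nsw_run A w (\<lambda>i. g (prefix_w i w)) \<and>
       (w \<in> nsw_lang A \<longrightarrow> streett_accepting A (\<lambda>i. g (prefix_w i w))))"

record 'a dcw =
  dcw_alph :: "'a set"
  dcw_states :: "nat set"
  dcw_init :: nat
  dcw_delta :: "nat \<Rightarrow> 'a \<Rightarrow> nat"
  dcw_acc :: "nat set"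

definition dcw_wf :: "'a dcw \<Rightarrow> bool" where
  "dcw_wf D \<longleftrightarrow> finite (dcw_states D) \<and> dcw_init D \<in> dcw_states D
     \<and> (\<forall>q \<in> dcw_states D. \<forall>a \<in> dcw_alph D. dcw_delta D q a \<in> dcw_states D)
     \<and> dcw_acc D \<subseteq> dcw_states D"

fun dcw_run :: "'a dcw \<Rightarrow> 'a word \<Rightarrow> nat \<Rightarrow> nat" where
  "dcw_run D w 0 = dcw_init D"
| "dcw_run D w (Suc i) = dcw_delta D (dcw_run D w i) (w i)"

definition dcw_lang :: "'a dcw \<Rightarrow> 'a word set" where
  "dcw_lang D = {w \<in> words_over (dcw_alph D).
      finite {i. dcw_run D w i \<in> dcw_acc D}}"

definition dcw_recognizable :: "'a set \<Rightarrow> 'a word set \<Rightarrow> bool" where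
  "dcw_recognizable \<Sigma> L \<longleftrightarrow>
     (\<exists>D. dcw_wf D \<and> dcw_alph D = \<Sigma> \<and> dcw_lang D = L)"

end

theory Submission
  imports Defs "HOL-Library.Countable_Set" "HOL-Library.Infinite_Set"
begin

definition liff :: "'a ltl \<Rightarrow> 'a ltl \<Rightarrow> 'a ltl" where
  "liff a b = LAnd (LNot (LAnd a (LNot b))) (LNot (LAnd (LNot a) b))"

fun bigand :: "'a ltl list \<Rightarrow> 'a ltl" where
  "bigand [] = LTrue"
| "bigand (f # fs) = LAnd f (bigand fs)"

definition phi :: "nat \<Rightarrow> nat ltl" where
  "phi n = LUntil LTrue (LAnd (LNot (Prop n)) (LAnd (LUntil (LNot (Prop n)) (Prop n))
     (bigand (map (\<lambda>b. liff (Prop b) (LUntil (LNot (Prop n)) (LAnd (Prop n) (Prop b)))) [0..<n]))))"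

definition inL :: "nat \<Rightarrow> nat set word \<Rightarrow> bool" where
  "inL n w \<longleftrightarrow> (\<exists>i j. i < j \<and> n \<notin> w i \<and> n \<in> w j \<and> (\<forall>m. i < m \<and> m < j \<longrightarrow> n \<notin> w m)
      \<and> (\<forall>b<n. b \<in> w i \<longleftrightarrow> b \<in> w j))"

lemma bigand_len: "(\<forall>f\<in>set xs. ltl_length f = c) \<Longrightarrow> ltl_length (bigand xs) = (c+1) * length xs + 1"
  by (induction xs) auto

lemma bigand_props: "ltl_props (bigand xs) = \<Union>(ltl_props ` set xs)"
  by (induction xs) auto

lemma bigand_sat: "ltl_sat w (bigand xs) \<longleftrightarrow> (\<forall>f\<in>set xs. ltl_sat w f)"
  by (induction xs) auto

lemma phi_len: "ltl_length (phi n) \<le> 30 * (n + 1) ^ 1"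
proof -
  have "ltl_length (bigand (map (\<lambda>b. liff (Prop b) (LUntil (LNot (Prop n)) (LAnd (Prop n) (Prop b)))) [0..<n]))
     = 22 * n + 1"
    by (subst bigand_len[where c=21]) (auto simp: liff_def)
  then show ?thesis by (simp add: phi_def)
qed

lemma phi_props: "ltl_props (phi n) \<subseteq> {0..n}"
  by (auto simp: phi_def bigand_props liff_def)

lemma sat_phi: "ltl_sat w (phi n) \<longleftrightarrow> inL n w"
proof
  assume "ltl_sat w (phi n)"
  then obtain i k where ni: "n \<notin> w i" and k1: "n \<in> w (i+k)" and k2: "\<forall>j<k. n \<notin> w (i+j)"
    and bits: "\<forall>b<n. b \<in> w i \<longleftrightarrow> (\<exists>k. n \<in> w (i+k) \<and> b \<in> w (i+k) \<and> (\<forall>j<k. n \<notin> w (i+j)))"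
  proof -
    have "\<exists>i k. n \<notin> w i \<and> n \<in> w (i+k) \<and> (\<forall>j<k. n \<notin> w (i+j))
    \<and> (\<forall>b<n. b \<in> w i \<longleftrightarrow> (\<exists>k. n \<in> w (i+k) \<and> b \<in> w (i+k) \<and> (\<forall>j<k. n \<notin> w (i+j))))"
      using \<open>ltl_sat w (phi n)\<close> by (simp add: phi_def bigand_sat liff_def suffix_w_def) (metis atLeastLessThan_iff zero_le)
    then show ?thesis using that by blast
  qed
  have uniq: "k' = k" if "n \<in> w (i+k')" "\<forall>j<k'. n \<notin> w (i+j)" for k'
    using that k1 k2 by (metis linorder_neqE_nat)
  have "k > 0" using ni k1 by (cases k) auto
  show "inL n w" unfolding inL_def
  proof (intro exI conjI allI impI)
    show "i < i + k" using \<open>k>0\<close> by simp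
    show "n \<notin> w i" by fact
    show "n \<in> w (i+k)" by fact
    show "n \<notin> w m" if "i < m \<and> m < i + k" for m
    proof -
      have "i + (m - i) = m" "m - i < k" using that by auto
      then show ?thesis using k2 by metis
    qed
    show "b \<in> w i \<longleftrightarrow> b \<in> w (i+k)" if "b < n" for b
      using bits[rule_format, OF that] uniq k1 k2 by blast
  qed
next
  assume "inL n w"
  then obtain i j where ij: "i < j" "n \<notin> w i" "n \<in> w j" "\<forall>m. i < m \<and> m < j \<longrightarrow> n \<notin> w m"
      "\<forall>b<n. b \<in> w i \<longleftrightarrow> b \<in> w j" unfolding inL_def by blast
  define k where "k = j - i"
  have jk: "j = i + k" using ij k_def by simp
  have k2: "\<forall>j'<k. n \<notin> w (i+j')" using ij jk by (metis add_less_cancel_left add_cancel_right_right less_add_same_cancel1 not_gr_zero)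
  have uniq: "k' = k" if "n \<in> w (i+k')" "\<forall>j<k'. n \<notin> w (i+j)" for k'
    using that ij(3) k2 jk by (metis linorder_neqE_nat)
  have bits: "\<forall>b<n. b \<in> w i \<longleftrightarrow> (\<exists>k. n \<in> w (i+k) \<and> b \<in> w (i+k) \<and> (\<forall>j<k. n \<notin> w (i+j)))"
    using ij(3,5) jk k2 uniq by blast
  show "ltl_sat w (phi n)"
    apply (simp add: phi_def bigand_sat liff_def suffix_w_def)
    apply (rule exI[of _ i])
    using ij(2,3) jk k2 bits by auto
qed

definition bitsof :: "nat \<Rightarrow> nat set \<Rightarrow> nat set" where
  "bitsof n a = a \<inter> {..<n}"

fun stp :: "nat \<Rightarrow> nat set set option \<Rightarrow> nat set \<Rightarrow> nat set set option" where
  "stp n None a = None"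
| "stp n (Some S) a = (if n \<in> a then (if bitsof n a \<in> S then None else Some {})
      else Some (insert (bitsof n a) S))"

definition Xn :: "nat \<Rightarrow> nat set set option set" where
  "Xn n = insert None (Some ` Pow (Pow {..<n}))"

fun run' :: "nat \<Rightarrow> nat set word \<Rightarrow> nat \<Rightarrow> nat set set option" where
  "run' n w 0 = Some {}"
| "run' n w (Suc i) = stp n (run' n w i) (w i)"

definition accby :: "nat \<Rightarrow> nat set word \<Rightarrow> nat \<Rightarrow> bool" where
  "accby n w k \<longleftrightarrow> (\<exists>i j. i < j \<and> j < k \<and> n \<notin> w i \<and> n \<in> w j \<and> (\<forall>m. i < m \<and> m < j \<longrightarrow> n \<notin> w m)
      \<and> bitsof n (w i) = bitsof n (w j))"

definition seen :: "nat \<Rightarrow> nat set word \<Rightarrow> nat \<Rightarrow> nat set set" where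
  "seen n w k = {bitsof n (w i) | i. i < k \<and> n \<notin> w i \<and> (\<forall>m. i < m \<and> m < k \<longrightarrow> n \<notin> w m)}"

lemma bitsof_eq: "bitsof n a = bitsof n c \<longleftrightarrow> (\<forall>b<n. b \<in> a \<longleftrightarrow> b \<in> c)"
  unfolding bitsof_def by auto

lemma run'_inv: "run' n w k = (if accby n w k then None else Some (seen n w k))"
proof (induction k)
  case 0
  then show ?case by (simp add: accby_def seen_def)
next
  case (Suc k)
  show ?case
  proof (cases "accby n w k")
    case True
    then have "accby n w (Suc k)" unfolding accby_def by (meson less_SucI)
    then show ?thesis using True Suc by simp
  next
    case F: False
    then have r: "run' n w (Suc k) = stp n (Some (seen n w k)) (w k)" using Suc by simp
    show ?thesis
    proof (cases "n \<in> w k")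
      case True
      have acc: "accby n w (Suc k) \<longleftrightarrow> bitsof n (w k) \<in> seen n w k"
      proof
        assume "accby n w (Suc k)"
        then obtain i j where ij: "i < j" "j < Suc k" "n \<notin> w i" "n \<in> w j" "\<forall>m. i < m \<and> m < j \<longrightarrow> n \<notin> w m"
          "bitsof n (w i) = bitsof n (w j)" unfolding accby_def by blast
        have "j = k" using F ij unfolding accby_def by (metis less_SucE)
        then show "bitsof n (w k) \<in> seen n w k" using ij unfolding seen_def by auto
      next
        assume "bitsof n (w k) \<in> seen n w k"
        then obtain i where "i < k" "n \<notin> w i" "\<forall>m. i < m \<and> m < k \<longrightarrow> n \<notin> w m" "bitsof n (w k) = bitsof n (w i)"
          unfolding seen_def by auto
        then show "accby n w (Suc k)" unfolding accby_def using True by (metis lessI)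
      qed
      have "seen n w (Suc k) = {}" unfolding seen_def using True
        by (auto, metis less_SucE lessI)
      then show ?thesis using r acc True by simp
    next
      case False
      have acc: "\<not> accby n w (Suc k)"
        using F False unfolding accby_def by (metis less_SucE)
      have "seen n w (Suc k) = insert (bitsof n (w k)) (seen n w k)"
        unfolding seen_def using False by (auto, (metis less_SucE less_SucI)+)
      then show ?thesis using r acc False by simp
    qed
  qed
qed

lemma accby_mono: "accby n w k \<Longrightarrow> k \<le> k' \<Longrightarrow> accby n w k'"
  unfolding accby_def by (meson less_le_trans)

lemma inL_accby: "inL n w \<longleftrightarrow> (\<exists>k. accby n w k)"
  unfolding inL_def accby_def bitsof_eq
  apply (rule iffI)
   apply (elim exE conjE)
   apply (rule_tac x="Suc j" in exI)
   apply blast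
  apply blast
  done

lemma fin_iff: "finite {i. run' n w i \<noteq> None} \<longleftrightarrow> inL n w"
proof
  assume "finite {i. run' n w i \<noteq> None}"
  then obtain k where "k \<notin> {i. run' n w i \<noteq> None}"
    using ex_new_if_finite infinite_UNIV_nat by blast
  then show "inL n w" using run'_inv[of n w k] inL_accby by (auto split: if_splits)
next
  assume "inL n w"
  then obtain k where k: "accby n w k" using inL_accby by blast
  have "{i. run' n w i \<noteq> None} \<subseteq> {..<k}"
  proof
    fix i assume "i \<in> {i. run' n w i \<noteq> None}"
    then have "\<not> accby n w i" using run'_inv[of n w i] by auto
    then show "i \<in> {..<k}" using accby_mono[OF k] by (meson lessThan_iff not_le)
  qed
  then show "finite {i. run' n w i \<noteq> None}" using finite_subset by blast
qed

lemma stp_X: "s \<in> Xn n \<Longrightarrow> stp n s a \<in> Xn n"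
  by (cases s) (auto simp: Xn_def bitsof_def)

lemma run'_X: "run' n w i \<in> Xn n"
  apply (induction i)
   apply (simp add: Xn_def)
  apply (simp add: stp_X)
  done

lemma Xn_fin: "finite (Xn n)" by (simp add: Xn_def)

lemma Xn_cnt: "countable (Xn n)" by (simp add: Xn_fin countable_finite)

definition Dn :: "nat \<Rightarrow> nat set dcw" where
  "Dn n = \<lparr>dcw_alph = Pow {0..n}, dcw_states = to_nat_on (Xn n) ` Xn n,
     dcw_init = to_nat_on (Xn n) (Some {}),
     dcw_delta = (\<lambda>q a. to_nat_on (Xn n) (stp n (from_nat_into (Xn n) q) a)),
     dcw_acc = to_nat_on (Xn n) ` (Some ` Pow (Pow {..<n}))\<rparr>"

lemma Dn_run: "dcw_run (Dn n) w i = to_nat_on (Xn n) (run' n w i)"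
  by (induction i) (simp_all add: Dn_def Xn_cnt run'_X)

lemma Dn_wf: "dcw_wf (Dn n)"
  unfolding dcw_wf_def
proof (intro conjI ballI)
  show "finite (dcw_states (Dn n))" by (simp add: Dn_def Xn_fin)
  show "dcw_init (Dn n) \<in> dcw_states (Dn n)" by (simp add: Dn_def Xn_def)
  show "dcw_acc (Dn n) \<subseteq> dcw_states (Dn n)" by (auto simp: Dn_def Xn_def)
  fix q a assume "q \<in> dcw_states (Dn n)"
  then obtain s where "s \<in> Xn n" "q = to_nat_on (Xn n) s" by (auto simp: Dn_def)
  then show "dcw_delta (Dn n) q a \<in> dcw_states (Dn n)"
    by (simp add: Dn_def Xn_cnt stp_X)
qed

lemma Dn_lang: "dcw_lang (Dn n) = ltl_lang {0..n} (phi n)"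
proof -
  have "dcw_run (Dn n) w i \<in> dcw_acc (Dn n) \<longleftrightarrow> run' n w i \<noteq> None" for w i
  proof -
    have "dcw_run (Dn n) w i \<in> dcw_acc (Dn n) \<longleftrightarrow> run' n w i \<in> Some ` Pow (Pow {..<n})"
      unfolding Dn_run
      apply (simp only: Dn_def dcw.simps)
      apply (rule inj_on_image_mem_iff[OF inj_on_to_nat_on[OF Xn_cnt]])
      using run'_X by (auto simp: Xn_def)
    also have "\<dots> \<longleftrightarrow> run' n w i \<noteq> None" using run'_X[of n w i] by (auto simp: Xn_def)
    finally show ?thesis .
  qed
  then show ?thesis
    unfolding dcw_lang_def ltl_lang_def using fin_iff sat_phi by (simp add: Dn_def)
qed

definition conc :: "'a list \<Rightarrow> 'a word \<Rightarrow> 'a word" where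
  "conc u x = (\<lambda>i. if i < length u then u ! i else x (i - length u))"

lemma prefix_conc: "prefix_w (length u) (conc u x) = u"
  unfolding prefix_w_def conc_def by (rule nth_equalityI) auto

lemma inf_set_shift:
  assumes "\<forall>i\<ge>a. r i = s (i - a + b)"
  shows "inf_set r = inf_set s"
proof (rule set_eqI)
  fix q
  show "q \<in> inf_set r \<longleftrightarrow> q \<in> inf_set s"
    unfolding inf_set_def mem_Collect_eq INFM_nat
  proof
    assume h: "\<forall>m. \<exists>n>m. r n = q"
    show "\<forall>m. \<exists>n>m. s n = q"
    proof
      fix m
      obtain n where "n > m + a" "r n = q" using h by blast
      then have "s (n - a + b) = q" "n - a + b > m" using assms by auto
      then show "\<exists>n>m. s n = q" by blast
    qed
  next
    assume h: "\<forall>m. \<exists>n>m. s n = q"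
    show "\<forall>m. \<exists>n>m. r n = q"
    proof
      fix m
      obtain n where n: "n > m + b" "s n = q" using h by blast
      have "r (n - b + a) = s (n - b + a - a + b)" using assms by auto
      also have "n - b + a - a + b = n" using n by auto
      finally have "r (n - b + a) = q" using n by simp
      moreover have "n - b + a > m" using n by auto
      ultimately show "\<exists>n>m. r n = q" by blast
    qed
  qed
qed

lemma run_states:
  assumes "nsw_wf A" "nsw_run A w r" "w \<in> words_over (nsw_alph A)"
  shows "r k \<in> nsw_states A"
proof (induction k)
  case 0 then show ?case using assms unfolding nsw_wf_def nsw_run_def by auto
next
  case (Suc k)
  have "r (Suc k) \<in> nsw_delta A (r k) (w k)" using assms(2) unfolding nsw_run_def by auto
  moreover have "w k \<in> nsw_alph A" using assms(3) unfolding words_over_def by auto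
  ultimately show ?case using assms(1) Suc unfolding nsw_wf_def by blast
qed

lemma gfg_residual:
  fixes g :: "'a list \<Rightarrow> nat"
  assumes G: "\<forall>w \<in> words_over (nsw_alph A).
       nsw_run A w (\<lambda>i. g (prefix_w i w)) \<and>
       (w \<in> nsw_lang A \<longrightarrow> streett_accepting A (\<lambda>i. g (prefix_w i w)))"
    and W2: "conc u2 x \<in> words_over (nsw_alph A)"
    and L1: "conc u1 x \<in> nsw_lang A"
    and eq: "g u1 = g u2"
  shows "conc u2 x \<in> nsw_lang A"
proof -
  let ?w1 = "conc u1 x" and ?w2 = "conc u2 x"
  let ?a = "length u2" and ?b = "length u1"
  define r1 where "r1 = (\<lambda>i. g (prefix_w i ?w1))"
  define r2 where "r2 = (\<lambda>i. g (prefix_w i ?w2))"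
  have W1: "?w1 \<in> words_over (nsw_alph A)" using L1 unfolding nsw_lang_def by auto
  have run1: "nsw_run A ?w1 r1" and acc1: "streett_accepting A r1"
    using G W1 L1 unfolding r1_def by auto
  have run2: "nsw_run A ?w2 r2" using G W2 unfolding r2_def by auto
  define r where "r = (\<lambda>i. if i < ?a then r2 i else r1 (i - ?a + ?b))"
  have r1b: "r1 ?b = r2 ?a" unfolding r1_def r2_def using prefix_conc eq by metis
  have "nsw_run A ?w2 r"
    unfolding nsw_run_def
  proof (intro conjI allI)
    show "r 0 \<in> nsw_init A"
    proof (cases "0 < ?a")
      case True then show ?thesis using run2 unfolding r_def nsw_run_def by simp
    next
      case False then show ?thesis using run2 r1b unfolding r_def nsw_run_def by simp
    qed
    fix i
    show "r (Suc i) \<in> nsw_delta A (r i) (?w2 i)"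
    proof (cases "Suc i < ?a")
      case True then show ?thesis using run2 unfolding r_def nsw_run_def by simp
    next
      case False
      show ?thesis
      proof (cases "i < ?a")
        case True
        then have "i = ?a - 1" "Suc i = ?a" using False by auto
        then have "r (Suc i) = r2 (Suc i)" "r i = r2 i" using r1b True unfolding r_def by auto
        then show ?thesis using run2 unfolding nsw_run_def by simp
      next
        case F2: False
        have "r1 (Suc (i - ?a + ?b)) \<in> nsw_delta A (r1 (i - ?a + ?b)) (?w1 (i - ?a + ?b))"
          using run1 unfolding nsw_run_def by blast
        moreover have "?w1 (i - ?a + ?b) = ?w2 i" using F2 unfolding conc_def by auto
        moreover have e: "Suc i - ?a + ?b = Suc (i - ?a + ?b)" using F2 by simp
        moreover have "r (Suc i) = r1 (Suc (i - ?a + ?b))" "r i = r1 (i - ?a + ?b)"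
          using F2 e False unfolding r_def by (metis, simp)
        ultimately show ?thesis by simp
      qed
    qed
  qed
  moreover have "inf_set r = inf_set r1"
    by (rule inf_set_shift[where a="?a" and b="?b"]) (auto simp: r_def r1b)
  then have "streett_accepting A r" using acc1 unfolding streett_accepting_def by simp
  ultimately show ?thesis using W2 unfolding nsw_lang_def by blast
qed

lemma lower:
  assumes wf: "nsw_wf A" and alph: "nsw_alph A = Pow {0..n}" and gfg: "nsw_gfg A"
    and lang: "nsw_lang A = ltl_lang {0..n} (phi n)"
  shows "2 ^ (2 ^ n) \<le> card (nsw_states A)"
proof -
  obtain g :: "nat set list \<Rightarrow> nat" where G: "\<forall>w \<in> words_over (nsw_alph A).
       nsw_run A w (\<lambda>i. g (prefix_w i w)) \<and>
       (w \<in> nsw_lang A \<longrightarrow> streett_accepting A (\<lambda>i. g (prefix_w i w)))"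
    using gfg unfolding nsw_gfg_def by blast
  define P where "P = Pow (Pow {..<n})"
  define uS where "uS S = (SOME xs. set xs = S)" for S :: "nat set set"
  have set_uS: "set (uS S) = S" if "S \<in> P" for S
  proof -
    have "finite S" using that unfolding P_def by (meson PowD finite_Pow_iff finite_lessThan finite_subset)
    then show ?thesis unfolding uS_def using finite_list by (metis (mono_tags) someI_ex)
  qed
  define xv where "xv v = (\<lambda>i::nat. if i = 0 then insert n v else {n})" for v :: "nat set"
  have Lang: "nsw_lang A = {w \<in> words_over (Pow {0..n}). inL n w}"
    using lang sat_phi unfolding ltl_lang_def by simp
  have words: "conc (uS S) (xv v) \<in> words_over (Pow {0..n})" if "S \<in> P" "v \<subseteq> {..<n}" for S v
  proof -
    have "conc (uS S) (xv v) i \<in> Pow {0..n}" for i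
    proof (cases "i < length (uS S)")
      case True
      then have "uS S ! i \<in> S" using set_uS[OF \<open>S \<in> P\<close>] by (metis nth_mem)
      then have "uS S ! i \<subseteq> {..<n}" using \<open>S \<in> P\<close> unfolding P_def by blast
      then have "uS S ! i \<in> Pow {0..n}" by auto
      then show ?thesis using True unfolding conc_def by simp
    next
      case False
      have "xv v (i - length (uS S)) \<in> Pow {0..n}"
        using \<open>v \<subseteq> {..<n}\<close> unfolding xv_def by auto
      then show ?thesis using False unfolding conc_def by simp
    qed
    then show ?thesis unfolding words_over_def by simp
  qed
  have inS: "inL n (conc (uS S) (xv v))" if "S \<in> P" "v \<in> S" for S v
  proof -
    let ?u = "uS S"
    have "v \<in> set ?u" using that set_uS by simp
    then obtain i where i: "i < length ?u" "?u ! i = v" by (metis in_set_conv_nth)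
    have nu: "n \<notin> ?u ! m" if "m < length ?u" for m
    proof -
      have "?u ! m \<in> S" using set_uS[OF \<open>S \<in> P\<close>] that by (metis nth_mem)
      then have "?u ! m \<subseteq> {..<n}" using \<open>S \<in> P\<close> unfolding P_def by blast
      then show ?thesis by auto
    qed
    have vn: "n \<notin> v" using i nu by blast
    show ?thesis unfolding inL_def
    proof (intro exI conjI allI impI)
      show "i < length ?u" by fact
      show "n \<notin> conc ?u (xv v) i" using i vn unfolding conc_def by simp
      show "n \<in> conc ?u (xv v) (length ?u)" unfolding conc_def xv_def by simp
      show "n \<notin> conc ?u (xv v) m" if "i < m \<and> m < length ?u" for m
        using that nu unfolding conc_def by simp
      show "b \<in> conc ?u (xv v) i \<longleftrightarrow> b \<in> conc ?u (xv v) (length ?u)" if "b < n" for b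
        using that i unfolding conc_def xv_def by auto
    qed
  qed
  have notT: "\<not> inL n (conc (uS T) (xv v))" if "T \<in> P" "v \<subseteq> {..<n}" "v \<notin> T" for T v
  proof
    let ?u = "uS T" let ?w = "conc (uS T) (xv v)"
    assume "inL n ?w"
    then obtain i j where ij: "i < j" "n \<notin> ?w i" "n \<in> ?w j" "\<forall>m. i < m \<and> m < j \<longrightarrow> n \<notin> ?w m"
      "\<forall>b<n. b \<in> ?w i \<longleftrightarrow> b \<in> ?w j" unfolding inL_def by blast
    have nu: "?u ! m \<subseteq> {..<n}" if "m < length ?u" for m
    proof -
      have "?u ! m \<in> T" using set_uS[OF \<open>T \<in> P\<close>] that by (metis nth_mem)
      then show "?u ! m \<subseteq> {..<n}" using \<open>T \<in> P\<close> unfolding P_def by blast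
    qed
    have il: "i < length ?u"
    proof (rule ccontr)
      assume "\<not> i < length ?u"
      then have "n \<in> ?w i" unfolding conc_def xv_def by simp
      then show False using ij(2) by simp
    qed
    have jl: "j \<ge> length ?u"
    proof (rule ccontr)
      assume "\<not> j \<ge> length ?u"
      then have "j < length ?u" by simp
      then have "?w j = ?u ! j" unfolding conc_def by simp
      then have "n \<notin> ?w j" using nu[OF \<open>j < length ?u\<close>] by auto
      then show False using ij(3) by simp
    qed
    have "j = length ?u"
    proof (rule ccontr)
      assume "j \<noteq> length ?u"
      then have "n \<notin> ?w (length ?u)" using ij(4) il jl by auto
      then show False unfolding conc_def xv_def by simp
    qed
    then have wj: "?w j = insert n v" unfolding conc_def xv_def by simp
    have wi: "?w i = ?u ! i" unfolding conc_def using il by simp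
    have "?u ! i = v"
    proof (rule set_eqI)
      fix b
      show "b \<in> ?u ! i \<longleftrightarrow> b \<in> v"
      proof (cases "b < n")
        case True
        then show ?thesis using ij(5) wi wj \<open>v \<subseteq> {..<n}\<close> by auto
      next
        case False
        then show ?thesis using nu[OF il] \<open>v \<subseteq> {..<n}\<close> by auto
      qed
    qed
    then have "v \<in> T" using il set_uS[OF \<open>T \<in> P\<close>] by (metis nth_mem)
    then show False using \<open>v \<notin> T\<close> by simp
  qed
  have key: False if "S \<in> P" "T \<in> P" "g (uS S) = g (uS T)" "v \<in> S" "v \<notin> T" for S T v
  proof -
    have vs: "v \<subseteq> {..<n}" using that(1,4) unfolding P_def by blast
    have W1: "conc (uS S) (xv v) \<in> words_over (Pow {0..n})" by (rule words[OF that(1) vs])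
    have W2: "conc (uS T) (xv v) \<in> words_over (nsw_alph A)" using words[OF that(2) vs] alph by simp
    have "conc (uS S) (xv v) \<in> nsw_lang A" using Lang W1 inS[OF that(1,4)] by simp
    then have "conc (uS T) (xv v) \<in> nsw_lang A"
      by (rule gfg_residual[OF G W2 _ that(3)])
    then show False using Lang notT[OF that(2) vs that(5)] by simp
  qed
  have inj: "inj_on (\<lambda>S. g (uS S)) P"
  proof (rule inj_onI)
    fix S T assume h: "S \<in> P" "T \<in> P" "g (uS S) = g (uS T)"
    show "S = T"
    proof (rule ccontr)
      assume "S \<noteq> T"
      then obtain v where "(v \<in> S \<and> v \<notin> T) \<or> (v \<in> T \<and> v \<notin> S)" by blast
      then show False
      proof
        assume "v \<in> S \<and> v \<notin> T" then show False using key[OF h(1) h(2) h(3)] by blast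
      next
        assume "v \<in> T \<and> v \<notin> S" then show False using key[OF h(2) h(1) h(3)[symmetric]] by blast
      qed
    qed
  qed
  have img: "(\<lambda>S. g (uS S)) ` P \<subseteq> nsw_states A"
  proof
    fix q assume "q \<in> (\<lambda>S. g (uS S)) ` P"
    then obtain S where S: "S \<in> P" "q = g (uS S)" by blast
    let ?w = "conc (uS S) (xv {})"
    have W: "?w \<in> words_over (nsw_alph A)" using words[OF S(1)] alph by simp
    have "nsw_run A ?w (\<lambda>i. g (prefix_w i ?w))" using G W by blast
    from run_states[OF wf this W] have "g (prefix_w (length (uS S)) ?w) \<in> nsw_states A" .
    then show "q \<in> nsw_states A" using S(2) by (simp only: prefix_conc)
  qed
  have fin: "finite (nsw_states A)" using wf unfolding nsw_wf_def by blast
  have "card P \<le> card (nsw_states A)"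
    by (rule card_inj_on_le[OF inj img fin])
  moreover have "card P = 2 ^ (2 ^ n)" unfolding P_def by (simp add: card_Pow)
  ultimately show ?thesis by simp
qed

theorem corollary24:
  shows "\<exists>(\<phi> :: nat \<Rightarrow> nat ltl) (AP :: nat \<Rightarrow> nat set) (c :: nat) (k :: nat).
     \<forall>n. finite (AP n) \<and> ltl_props (\<phi> n) \<subseteq> AP n
       \<and> ltl_length (\<phi> n) \<le> c * (n + 1) ^ k
       \<and> dcw_recognizable (Pow (AP n)) (ltl_lang (AP n) (\<phi> n))
       \<and> (\<forall>A :: nat set nsw. nsw_wf A \<and> nsw_alph A = Pow (AP n) \<and> nsw_gfg A
             \<and> nsw_lang A = ltl_lang (AP n) (\<phi> n)
           \<longrightarrow> card (nsw_states A) \<ge> 2 ^ (2 ^ n))"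
proof (rule exI[of _ phi], rule exI[of _ "\<lambda>n. {0..n}"], rule exI[of _ 30], rule exI[of _ 1],
    intro allI conjI)
  fix n :: nat
  show "finite {0..n}" by simp
  show "ltl_props (phi n) \<subseteq> {0..n}" by (rule phi_props)
  show "ltl_length (phi n) \<le> 30 * (n + 1) ^ 1" by (rule phi_len)
  show "dcw_recognizable (Pow {0..n}) (ltl_lang {0..n} (phi n))"
    unfolding dcw_recognizable_def
  proof (intro exI conjI)
    show "dcw_wf (Dn n)" by (rule Dn_wf)
    show "dcw_alph (Dn n) = Pow {0..n}" by (simp add: Dn_def)
    show "dcw_lang (Dn n) = ltl_lang {0..n} (phi n)" by (rule Dn_lang)
  qed
  show "nsw_wf A \<and> nsw_alph A = Pow {0..n} \<and> nsw_gfg A \<and> nsw_lang A = ltl_lang {0..n} (phi n)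
      \<longrightarrow> card (nsw_states A) \<ge> 2 ^ (2 ^ n)" for A :: "nat set nsw"
    using lower by blast
qed

end
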